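(* For $u>1$ define $J(u)=\int_0^1\frac{\ell(u,v)}{u^2-v^2}\,dv$ and $\mathcal B(u)=L(u)J(u)$. Then: (i) $J(u)=\frac{1}{2u}\Big[\operatorname{Li}_2\!\big(\tfrac1u\big)-\operatorname{Li}_2\!\big(-\tfrac1u\big)-\log u\,L(u)\Big]$; (ii) $J(u)=\frac{\pi^2}{8}+O\big((u-1)|\log(u-1)|\big)$ as $u\downarrow1$, and $J(u)=\frac{1-\log u}{u^2}+O\Big(\frac{1+\log u}{u^4}\Big)$ as $u\to\infty$; (iii) if $\delta>0$ and $\chi_1\in C_c^\infty([1,\infty))$ satisfies $\chi_1(u)=1$ for $1\le u\le1+\delta$ and $\chi_1(u)=0$ for $u\ge1+2\delta$, then $h(u):=\mathcal B(u)-\frac{\pi^2}{8}\chi_1(u)L(u)$ belongs to $W^{1,1}(1,\infty)$.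
   Context: For $u>1$ let $L(u)=\log\frac{u+1}{u-1}$, and for $u\ge1$, $0<v\le1$ let $\ell(u,v)=\log\frac{1}{uv}$. $\operatorname{Li}_2$ is the dilogarithm. $W^{1,1}(1,\infty)$ is the Sobolev space of integrable functions with integrable weak derivative. *)

theory Defs
  imports "HOL-Analysis.Analysis" "HOL-Library.Landau_Symbols"
begin

definition Lfun :: "real \<Rightarrow> real" where
  "Lfun u = ln ((u + 1) / (u - 1))"

definition ellfun :: "real \<Rightarrow> real \<Rightarrow> real" where
  "ellfun u v = ln (1 / (u * v))"

text \<open>Dilogarithm via its power series (valid for |x| <= 1, which covers all uses here).\<close>
definition Li2 :: "real \<Rightarrow> real" where
  "Li2 x = (\<Sum>n. x ^ Suc n / (real (Suc n))\<^sup>2)"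

definition Jfun :: "real \<Rightarrow> real" where
  "Jfun u = (LINT v:{0..1}|lborel. ellfun u v / (u\<^sup>2 - v\<^sup>2))"

definition Bcal :: "real \<Rightarrow> real" where
  "Bcal u = Lfun u * Jfun u"

text \<open>f is C-infinity on S: there is a sequence of derivatives, derivatives taken within S
  (one-sided at boundary points).\<close>
definition smooth_on_set :: "real set \<Rightarrow> (real \<Rightarrow> real) \<Rightarrow> bool" where
  "smooth_on_set S f \<longleftrightarrow> (\<exists>D :: nat \<Rightarrow> real \<Rightarrow> real. (\<forall>x\<in>S. D 0 x = f x) \<and>
      (\<forall>k. \<forall>x\<in>S. (D k has_real_derivative D (Suc k) x) (at x within S)))"

definition test_fun :: "(real \<Rightarrow> real) \<Rightarrow> bool" where
  "test_fun \<phi> \<longleftrightarrow> smooth_on_set UNIV \<phi> \<and>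
      (\<exists>a b. 1 < a \<and> a \<le> b \<and> (\<forall>x. x \<notin> {a..b} \<longrightarrow> \<phi> x = 0))"

definition W11 :: "(real \<Rightarrow> real) \<Rightarrow> bool" where
  "W11 h \<longleftrightarrow> set_integrable lborel {1<..} h \<and>
     (\<exists>g. set_integrable lborel {1<..} g \<and>
        (\<forall>\<phi>. test_fun \<phi> \<longrightarrow>
           (LINT x:{1<..}|lborel. h x * deriv \<phi> x) = - (LINT x:{1<..}|lborel. g x * \<phi> x)))"

end

theory Submission
  imports Defs "HOL-Real_Asymp.Real_Asymp"
begin


lemma inv_sq_sums: "(\<lambda>n. 1 / (1 + real n)\<^sup>2) sums (pi\<^sup>2 / 6)"
  using inverse_squares_sums by simp

lemma summable_inv_sq: "summable (\<lambda>n. 1 / (real (Suc n))\<^sup>2)"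
  using sums_summable[OF inv_sq_sums] by simp

lemma Li2_sums: assumes "\<bar>x\<bar> \<le> 1" shows "(\<lambda>n. x ^ Suc n / (real (Suc n))\<^sup>2) sums Li2 x"
proof -
  have "summable (\<lambda>n. x ^ Suc n / (real (Suc n))\<^sup>2)"
  proof (rule summable_comparison_test'[OF summable_inv_sq])
    fix n :: nat
    have "\<bar>x\<bar> ^ Suc n \<le> 1" using assms by (intro power_le_one) auto
    then show "norm (x ^ Suc n / (real (Suc n))\<^sup>2) \<le> 1 / (real (Suc n))\<^sup>2"
      by (simp add: abs_mult power_abs divide_right_mono del: of_nat_Suc)
  qed
  then show ?thesis unfolding Li2_def by (simp add: summable_sums del: of_nat_Suc)
qed

lemma Li2_sums': assumes "\<bar>x\<bar> \<le> 1" shows "(\<lambda>n. x ^ n / (real n)\<^sup>2) sums Li2 x"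
  using Li2_sums[OF assms] sums_Suc_iff[of "\<lambda>n. x ^ n / (real n)\<^sup>2" "Li2 x"] by simp

definition chi :: "real \<Rightarrow> real" where "chi x = (Li2 x - Li2 (-x)) / 2"

lemma chi_sums: assumes "\<bar>x\<bar> \<le> 1"
  shows "(\<lambda>k. x ^ (2*k+1) / (real (2*k+1))\<^sup>2) sums chi x"
proof -
  define f where "f n = (x ^ Suc n / (real (Suc n))\<^sup>2 - (-x) ^ Suc n / (real (Suc n))\<^sup>2) / 2" for n
  have "f sums chi x" unfolding f_def chi_def
    by (intro sums_divide sums_diff Li2_sums) (use assms in auto)
  moreover have "f n = 0" if "n \<notin> range (\<lambda>k::nat. 2*k)" for n
  proof -
    have "odd n" using that by (metis evenE rangeI)
    then show ?thesis by (simp add: f_def)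
  qed
  ultimately have "(\<lambda>k. f (2*k)) sums chi x"
    by (subst sums_mono_reindex) (auto simp: strict_mono_def)
  moreover have "f (2*k) = x ^ (2*k+1) / (real (2*k+1))\<^sup>2" for k
    by (simp add: f_def)
  ultimately show ?thesis by simp
qed

lemma chi_one: "chi 1 = pi\<^sup>2 / 8"
proof -
  define f :: "nat \<Rightarrow> real" where "f n = 1 / (real (Suc n))\<^sup>2" for n
  define fe where "fe n = (if even n then f n else 0)" for n
  define fo where "fo n = (if odd n then f n else 0)" for n
  have "(\<lambda>k. fe (2*k)) sums chi 1"
    using chi_sums[of 1] by (simp add: fe_def f_def)
  then have e: "fe sums chi 1"
    by (subst (asm) sums_mono_reindex) (auto simp: strict_mono_def fe_def elim!: evenE)
  have "(\<lambda>k. 1/4 * (1 / (1 + real k)\<^sup>2)) sums (1/4 * (pi\<^sup>2 / 6))"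
    by (intro sums_mult inv_sq_sums)
  moreover have "fo (2*k+1) = 1/4 * (1 / (1 + real k)\<^sup>2)" for k
    by (simp add: fo_def f_def power2_eq_square field_simps)
  ultimately have "(\<lambda>k. fo (2*k+1)) sums (pi\<^sup>2 / 24)" by simp
  then have o: "fo sums (pi\<^sup>2 / 24)"
    by (subst (asm) sums_mono_reindex) (auto simp: strict_mono_def fo_def elim!: oddE)
  have "(\<lambda>n. fe n + fo n) sums (chi 1 + pi\<^sup>2 / 24)" by (intro sums_add e o)
  moreover have "(\<lambda>n. fe n + fo n) = f" by (auto simp: fe_def fo_def)
  ultimately have "f sums (chi 1 + pi\<^sup>2 / 24)" by simp
  moreover have "f sums (pi\<^sup>2 / 6)" unfolding f_def using inv_sq_sums by simp
  ultimately have "chi 1 + pi\<^sup>2 / 24 = pi\<^sup>2 / 6" using sums_unique2 by blast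
  then show ?thesis by simp
qed

lemma Li2_cont: "continuous_on {-1..1} Li2"
proof -
  have "uniform_limit {-1..1} (\<lambda>N x. \<Sum>n<N. x ^ Suc n / (real (Suc n))\<^sup>2)
          (\<lambda>x. \<Sum>n. x ^ Suc n / (real (Suc n))\<^sup>2) sequentially"
  proof (rule Weierstrass_m_test[OF _ summable_inv_sq])
    fix n :: nat and x :: real assume "x \<in> {-1..1}"
    then have "\<bar>x\<bar> ^ Suc n \<le> 1" by (intro power_le_one) auto
    then show "norm (x ^ Suc n / (real (Suc n))\<^sup>2) \<le> 1 / (real (Suc n))\<^sup>2"
      by (simp add: abs_mult power_abs divide_right_mono del: of_nat_Suc)
  qed
  then have "continuous_on {-1..1} (\<lambda>x. \<Sum>n. x ^ Suc n / (real (Suc n))\<^sup>2)"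
    by (rule uniform_limit_theorem[rotated]) (auto intro!: always_eventually continuous_intros)
  moreover have "(\<lambda>x. \<Sum>n. x ^ Suc n / (real (Suc n))\<^sup>2) = Li2" by (auto simp: Li2_def fun_eq_iff)
  ultimately show ?thesis by metis
qed

lemma chi_cont: "continuous_on {-1..1} chi"
proof -
  have "continuous_on {-1..1} (\<lambda>x. Li2 (-x))"
    by (rule continuous_on_compose2[OF Li2_cont]) (auto intro!: continuous_intros)
  then show ?thesis unfolding chi_def[abs_def]
    by (intro continuous_intros Li2_cont) auto
qed

lemma Li2_deriv: assumes "\<bar>x\<bar> < 1" "x \<noteq> 0"
  shows "(Li2 has_real_derivative (- ln (1 - x) / x)) (at x)"
proof -
  define c where "c n = 1 / (real n)\<^sup>2" for n
  have sm: "summable (\<lambda>n. c n * 1 ^ n)"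
    using Li2_sums'[of 1] by (auto simp: c_def sums_summable)
  have d: "((\<lambda>x. \<Sum>n. c n * x^n) has_real_derivative (\<Sum>n. diffs c n * x^n)) (at x)"
    by (rule termdiffs_strong[OF sm]) (use assms in auto)
  have eq: "(\<Sum>n. c n * y^n) = Li2 y" if "y \<in> ball 0 1" for y
  proof -
    have "\<bar>y\<bar> \<le> 1" using that by auto
    from Li2_sums'[OF this] show ?thesis by (simp add: c_def sums_iff)
  qed
  have "(\<lambda>n. x ^ n / real n) sums (- ln (1 - x))"
    using sums_minus[OF ln_series'[of "-x"]] assms by simp
  then have "(\<lambda>n. x ^ Suc n / real (Suc n)) sums (- ln (1 - x))"
    using sums_Suc_iff[of "\<lambda>n. x ^ n / real n"] by simp
  then have "(\<lambda>n. x ^ Suc n / real (Suc n) / x) sums (- ln (1 - x) / x)"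
    by (rule sums_divide)
  moreover have "x ^ Suc n / real (Suc n) / x = diffs c n * x ^ n" for n
    using assms by (simp add: diffs_def c_def power2_eq_square field_simps del: of_nat_Suc)
  ultimately have "(\<Sum>n. diffs c n * x^n) = - ln (1 - x) / x" by (simp add: sums_iff)
  with d have "((\<lambda>x. \<Sum>n. c n * x^n) has_real_derivative (- ln (1 - x) / x)) (at x)" by simp
  then show ?thesis
    by (rule has_field_derivative_transform_within_open[where S="ball 0 1"]) (use assms eq in auto)
qed

lemma chi_deriv: assumes "0 < x" "x < 1"
  shows "(chi has_real_derivative (artanh x / x)) (at x)"
proof -
  have d1: "(Li2 has_real_derivative (- ln (1 - x) / x)) (at x)"
    using Li2_deriv assms by auto
  have d2: "(Li2 has_real_derivative (- ln (1 - (-x)) / (-x))) (at (-x))"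
    using Li2_deriv[of "-x"] assms by auto
  have d3: "((\<lambda>z. Li2 (-z)) has_real_derivative (- ln (1 - (-x)) / (-x)) * (-1)) (at x)"
    by (rule DERIV_chain2[where f=Li2 and g=uminus, OF d2]) (auto intro!: derivative_eq_intros)
  have "((\<lambda>x. (Li2 x - Li2 (-x)) / 2) has_real_derivative
          ((- ln (1 - x) / x) - (- ln (1 - (-x)) / (-x)) * (-1)) / 2) (at x)"
    by (rule DERIV_cdivide[OF DERIV_diff[OF d1 d3]])
  moreover have "((- ln (1 - x) / x) - (- ln (1 - (-x)) / (-x)) * (-1)) / 2 = artanh x / x"
    using assms by (simp add: artanh_def ln_div field_simps)
  ultimately show ?thesis by (simp add: chi_def[abs_def])
qed



lemma chi_bounds: assumes "0 \<le> x" "x \<le> 1"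
  shows "0 \<le> chi x" "chi x \<le> chi 1" "x \<le> chi x" "chi x - x \<le> x ^ 3 * chi 1"
proof -
  have s: "(\<lambda>k. x ^ (2*k+1) / (real (2*k+1))\<^sup>2) sums chi x" using chi_sums assms by auto
  have s1: "(\<lambda>k. 1 ^ (2*k+1) / (real (2*k+1))\<^sup>2) sums chi 1" using chi_sums[of 1] by simp
  show "0 \<le> chi x" by (rule sums_le[OF _ sums_zero s]) (use assms in auto)
  show "chi x \<le> chi 1"
  proof (rule sums_le[OF _ s s1])
    fix k :: nat
    have "x ^ (2*k+1) \<le> 1" using assms by (intro power_le_one) auto
    from divide_right_mono[OF this, of "(real (2*k+1))\<^sup>2"]
    show "x ^ (2*k+1) / (real (2*k+1))\<^sup>2 \<le> 1 ^ (2*k+1) / (real (2*k+1))\<^sup>2" by simp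
  qed
  have s2: "(\<lambda>k. x ^ (2*k+1) / (real (2*k+1))\<^sup>2 - (if k = 0 then x else 0)) sums (chi x - x)"
    using sums_diff[OF s sums_single[of 0 "\<lambda>_. x"]] by simp
  have s3: "(\<lambda>k. x^3 * (1 ^ (2*k+1) / (real (2*k+1))\<^sup>2)) sums (x^3 * chi 1)"
    by (intro sums_mult s1)
  have "0 \<le> chi x - x" by (rule sums_le[OF _ sums_zero s2]) (use assms in auto)
  then show "x \<le> chi x" by simp
  show "chi x - x \<le> x ^ 3 * chi 1"
  proof (rule sums_le[OF _ s2 s3])
    fix k :: nat
    show "x ^ (2*k+1) / (real (2*k+1))\<^sup>2 - (if k = 0 then x else 0) \<le> x^3 * (1 ^ (2*k+1) / (real (2*k+1))\<^sup>2)"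
    proof (cases "k = 0")
      case True then show ?thesis using assms by (simp add: mult_nonneg_nonneg)
    next
      case False
      then have "x ^ (2*k+1) \<le> x ^ 3" using assms by (intro power_decreasing) auto
      then show ?thesis using False by (simp add: divide_right_mono)
    qed
  qed
qed

lemma E_tendsto: "((\<lambda>t::real. (1 - t) * (1 + ln 2 - ln (1 - t))) \<longlongrightarrow> 0) (at_left 1)"
  by real_asymp

lemma chi_near1: assumes "1/2 \<le> x" "x < 1"
  shows "chi 1 - chi x \<le> (1 - x) * (1 + ln 2 - ln (1 - x))"
proof -
  define E where "E t = (1 - t) * (1 + ln 2 - ln (1 - t))" for t :: real
  define D where "D t = chi t + E t" for t
  have contE: "continuous_on {x..1} E"
  proof (subst continuous_on_eq_continuous_within, intro ballI)
    fix t assume t: "t \<in> {x..1}"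
    show "continuous (at t within {x..1}) E"
    proof (cases "t = 1")
      case True
      have "(E \<longlongrightarrow> 0) (at_left 1)" using E_tendsto unfolding E_def[abs_def] .
      moreover have "E 1 = 0" by (simp add: E_def)
      ultimately show ?thesis using True assms
        by (simp add: continuous_within at_within_Icc_at_left)
    next
      case False
      then have "t < 1" using t by auto
      then have "isCont E t" unfolding E_def[abs_def] by (auto intro!: continuous_intros)
      then show ?thesis by (rule continuous_at_imp_continuous_within)
    qed
  qed
  have contD: "continuous_on {x..1} D" unfolding D_def[abs_def]
    by (intro continuous_intros contE continuous_on_subset[OF chi_cont]) (use assms in auto)
  have "D 1 \<le> D x"
  proof (rule DERIV_nonpos_imp_decreasing_open[OF _ _ contD])
    fix t assume t: "x < t" "t < 1"
    then have t0: "0 < t" "1/2 < t" using assms by auto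
    have dE: "(E has_real_derivative (- ln 2 + ln (1 - t))) (at t)"
      unfolding E_def[abs_def] using t
      by (auto intro!: derivative_eq_intros simp: divide_simps)
    have dD: "(D has_real_derivative (artanh t / t + (- ln 2 + ln (1 - t)))) (at t)"
      unfolding D_def[abs_def] using chi_deriv[of t] t t0 dE by (auto intro!: derivative_eq_intros)
    define A where "A = ln 2 - ln (1 - t)"
    have "ln (1 - t) \<le> ln (1/2)" using t0 t by (subst ln_le_cancel_iff) auto
    then have l1: "ln (1 - t) \<le> - ln 2" by (simp add: ln_div)
    have "0 < ln (2::real)" by simp
    with l1 have A0: "0 \<le> A" unfolding A_def by linarith
    have "ln (1 + t) \<le> ln 2" using t0 t by (subst ln_le_cancel_iff) auto
    then have "artanh t \<le> A / 2" using t0 t unfolding A_def artanh_def by (simp add: ln_div)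
    then have "artanh t / t \<le> A / 2 / t" using t0 by (intro divide_right_mono) auto
    also have "A / 2 / t \<le> A" using t0 A0
      by (simp add: field_simps) (metis mult_le_cancel_left1 less_eq_real_def not_le)
    finally have "artanh t / t + (- ln 2 + ln (1 - t)) \<le> 0" unfolding A_def by simp
    with dD show "\<exists>y. (D has_real_derivative y) (at t) \<and> y \<le> 0" by blast
  qed (use assms in auto)
  moreover have "D 1 = chi 1" by (simp add: D_def E_def)
  ultimately show ?thesis by (simp add: D_def E_def)
qed



lemma Icc_Ioo_integral:
  "(LINT v:{a..b}|lborel. f v) = (LINT v:{a<..<b}|lborel. (f v :: real))" for a b :: real
  by (rule set_integral_discrete_difference[where X="{a,b}"]) (auto simp: not_less)

lemma Icc_Ioo_integrable:
  "set_integrable lborel {a..b} f \<longleftrightarrow> set_integrable lborel {a<..<b} (f :: real \<Rightarrow> real)" for a b :: real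
  by (rule set_integrable_discrete_difference[where X="{a,b}"]) (auto simp: not_less)

lemma xlnx_tendsto: "((\<lambda>v::real. v * ln v) \<longlongrightarrow> 0) (at_right 0)"
  by real_asymp

lemma aux_deriv_eq: fixes m x :: real shows "m \<noteq> 0 \<Longrightarrow> x \<noteq> 0 \<Longrightarrow> (m * x^n)/m^2 - (m*x^n*ln x + x^(n+1)*(1/x))/m = - ln x * x^n"
proof -
  assume a: "m \<noteq> 0" "x \<noteq> 0"
  have "x^(n+1)*(1/x) = x^n" using a by simp
  moreover have "(m * x^n)/m^2 = x^n/m" using a by (simp add: power2_eq_square)
  ultimately show ?thesis using a by (simp add: field_simps)
qed

lemma mlnpow_deriv: "0 < x \<Longrightarrow> 0 < m \<Longrightarrow> 1 + real n = m \<Longrightarrow>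
  ((\<lambda>v::real. (1/m^2) * v^(n+1) - (1/m) * (v^(n+1) * ln v)) has_real_derivative - ln x * x^n) (at x)"
  apply (rule derivative_eq_intros refl | simp)+
  apply (simp add: field_simps power2_eq_square)
  done

lemma mlnpow:
  shows "set_integrable lborel {0<..<1} (\<lambda>v::real. - ln v * v ^ n)"
    and "(LINT v:{0<..<1}|lborel. - ln v * v ^ n) = 1 / (real n + 1)\<^sup>2"
proof -
  define m where "m = 1 + real n"
  have m: "0 < m" "1 + real n = m" by (auto simp: m_def)
  define F where "F v = (1/m^2) * v^(n+1) - (1/m) * (v^(n+1) * ln v)" for v :: real
  have d: "DERIV F x :> - ln x * x^n" if "0 < x" for x
    unfolding F_def[abs_def] using mlnpow_deriv[OF that m] .
  have l0: "(F \<longlongrightarrow> 0) (at_right 0)"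
  proof -
    have "((\<lambda>v. (1/m^2) * v^(n+1) - (1/m) * (v^n * (v * ln v))) \<longlongrightarrow>
            (1/m^2) * 0^(n+1) - (1/m) * (0^n * 0)) (at_right 0)"
      by (intro tendsto_intros xlnx_tendsto)
    moreover have "(\<lambda>v. (1/m^2) * v^(n+1) - (1/m) * (v^n * (v * ln v))) = F"
      by (auto simp: F_def fun_eq_iff mult_ac)
    ultimately show ?thesis by simp
  qed
  have l1: "(F \<longlongrightarrow> 1/m^2) (at_left 1)"
  proof -
    have "(F \<longlongrightarrow> F 1) (at_left 1)" unfolding F_def[abs_def]
      by (intro tendsto_intros) auto
    then show ?thesis by (simp add: F_def)
  qed
  note r = interval_integral_FTC_nonneg[of "ereal 0" "ereal 1" F "\<lambda>v. - ln v * v^n" 0 "1/m^2"]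
  have hyps: "ereal 0 < ereal 1"
     "\<And>x. ereal 0 < ereal x \<Longrightarrow> ereal x < ereal 1 \<Longrightarrow> DERIV F x :> - ln x * x^n"
     "\<And>x. ereal 0 < ereal x \<Longrightarrow> ereal x < ereal 1 \<Longrightarrow> isCont (\<lambda>v. - ln v * v^n) x"
     "AE x in lborel. ereal 0 < ereal x \<longrightarrow> ereal x < ereal 1 \<longrightarrow> 0 \<le> - ln x * x^n"
     "((F \<circ> real_of_ereal) \<longlongrightarrow> 0) (at_right (ereal 0))"
     "((F \<circ> real_of_ereal) \<longlongrightarrow> 1/m^2) (at_left (ereal 1))"
  proof -
    have "0 \<le> - ln x * x^n" if "0 < x" "x < 1" for x :: real
      using that by (intro mult_nonneg_nonneg) auto
    then show "AE x in lborel. ereal 0 < ereal x \<longrightarrow> ereal x < ereal 1 \<longrightarrow> 0 \<le> - ln x * x^n"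
      by (intro AE_I2) auto
  qed (use d l0 l1 in \<open>auto intro!: continuous_intros simp: ereal_tendsto_simps1\<close>)
  from r[OF hyps] show "set_integrable lborel {0<..<1} (\<lambda>v::real. - ln v * v ^ n)"
    and "(LINT v:{0<..<1}|lborel. - ln v * v ^ n) = 1 / (real n + 1)\<^sup>2"
    using m by (simp_all add: interval_lebesgue_integral_def add.commute)
qed



lemma IA: assumes u: "u > 1"
  shows "set_integrable lborel {0<..<1} (\<lambda>v::real. - ln u / (u\<^sup>2 - v\<^sup>2))"
    and "(LINT v:{0<..<1}|lborel. - ln u / (u\<^sup>2 - v\<^sup>2)) = - ln u * Lfun u / (2*u)"
proof -
  have nz: "u\<^sup>2 - v\<^sup>2 \<noteq> 0" if "v \<in> {0..1}" for v :: real
  proof -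
    have "v\<^sup>2 \<le> 1" using that by (auto intro!: power_le_one)
    moreover have "1 < u\<^sup>2" using u by (metis less_1_mult one_less_power power2_eq_square zero_less_two)
    ultimately show ?thesis by auto
  qed
  have cont: "continuous_on {0..1} (\<lambda>v::real. - ln u / (u\<^sup>2 - v\<^sup>2))"
    using nz by (auto intro!: continuous_intros)
  have i1: "set_integrable lborel {0..1} (\<lambda>v::real. - ln u / (u\<^sup>2 - v\<^sup>2))"
    by (rule borel_integrable_atLeastAtMost'[OF cont])
  then show "set_integrable lborel {0<..<1} (\<lambda>v::real. - ln u / (u\<^sup>2 - v\<^sup>2))"
    by (simp add: Icc_Ioo_integrable)
  define F where "F v = - ln u * (ln (u + v) - ln (u - v)) / (2*u)" for v :: real
  have "(LBINT v=ereal 0..ereal 1. - ln u / (u\<^sup>2 - v\<^sup>2)) = F 1 - F 0"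
  proof (rule interval_integral_FTC_finite)
    show "continuous_on {min 0 1..max 0 1} (\<lambda>v::real. - ln u / (u\<^sup>2 - v\<^sup>2))" using cont by simp
    fix x :: real assume x: "min 0 1 \<le> x" "x \<le> max 0 1"
    then have "0 < u + x" "0 < u - x" using u by auto
    then have "(F has_real_derivative (- ln u * (1 / (u + x) - (- 1 / (u - x))) / (2*u))) (at x)"
      unfolding F_def[abs_def] by (auto intro!: derivative_eq_intros)
    moreover have "- ln u * (1 / (u + x) - (- 1 / (u - x))) / (2*u) = - ln u / (u\<^sup>2 - x\<^sup>2)"
    proof -
      have e: "u\<^sup>2 - x\<^sup>2 = (u+x)*(u-x)" by (simp add: power2_eq_square algebra_simps)
      have "1 / (u + x) - (- 1 / (u - x)) = 2*u / ((u+x)*(u-x))"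
        using \<open>0 < u + x\<close> \<open>0 < u - x\<close> by (simp add: field_simps)
      then show ?thesis unfolding e using \<open>0 < u + x\<close> \<open>0 < u - x\<close> u by simp
    qed
    ultimately show "(F has_vector_derivative - ln u / (u\<^sup>2 - x\<^sup>2)) (at x within {min 0 1..max 0 1})"
      by (simp add: has_real_derivative_iff_has_vector_derivative has_vector_derivative_at_within)
  qed
  moreover have "F 1 - F 0 = - ln u * Lfun u / (2*u)"
    using u by (simp add: F_def Lfun_def ln_div)
  ultimately show "(LINT v:{0<..<1}|lborel. - ln u / (u\<^sup>2 - v\<^sup>2)) = - ln u * Lfun u / (2*u)"
    by (simp add: interval_integral_Icc Icc_Ioo_integral)
qed

lemma IB: assumes u: "u > 1"
  shows "set_integrable lborel {0<..<1} (\<lambda>v::real. - ln v / (u\<^sup>2 - v\<^sup>2))"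
    and "(LINT v:{0<..<1}|lborel. - ln v / (u\<^sup>2 - v\<^sup>2)) = chi (1/u) / u"
proof -
  define c where "c k = 1 / u ^ (2*k+2)" for k :: nat
  define g where "g k v = indicator {0<..<1} v *\<^sub>R (- ln v * v^(2*k) * c k)" for k :: nat and v :: real
  have int_g: "integrable lborel (g k)" for k
  proof -
    have "set_integrable lborel {0<..<1} (\<lambda>v::real. - ln v * v^(2*k) * c k)"
      using mlnpow(1)[of "2*k"] by (intro set_integrable_mult_left) auto
    then show ?thesis unfolding g_def[abs_def] set_integrable_def .
  qed
  have integral_g: "integral\<^sup>L lborel (g k) = (1/u) ^ (2*k+1) / (real (2*k+1))\<^sup>2 * (1/u)" for k
  proof -
    have "integral\<^sup>L lborel (g k) = (LINT v:{0<..<1}|lborel. - ln v * v^(2*k) * c k)"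
      unfolding g_def[abs_def] set_lebesgue_integral_def ..
    also have "\<dots> = (LINT v:{0<..<1}|lborel. - ln v * v^(2*k)) * c k"
      by (rule set_integral_mult_left)
    also have "\<dots> = 1 / (real (2*k) + 1)\<^sup>2 * c k" by (simp only: mlnpow(2))
    also have "\<dots> = (1/u) ^ (2*k+1) / (real (2*k+1))\<^sup>2 * (1/u)"
      by (simp add: c_def power_divide field_simps)
    finally show ?thesis .
  qed
  have g_nonneg: "0 \<le> g k v" for k v
  proof (cases "v \<in> {0<..<1}")
    case True
    then have "0 \<le> - ln v" by simp
    moreover have "0 \<le> c k" using u by (simp add: c_def)
    moreover have "0 \<le> v^(2*k)" using True by simp
    ultimately have "0 \<le> - ln v * v^(2*k) * c k" by (intro mult_nonneg_nonneg)
    then show ?thesis using True by (simp add: g_def)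
  qed (simp add: g_def)
  have sums_int: "(\<lambda>k. integral\<^sup>L lborel (g k)) sums (chi (1/u) / u)"
    unfolding integral_g using sums_mult2[OF chi_sums[of "1/u"], of "1/u"] u by simp
  have gsum: "(\<lambda>k. g k v) sums (indicator {0<..<1} v *\<^sub>R (- ln v / (u\<^sup>2 - v\<^sup>2)))" for v
  proof (cases "v \<in> {0<..<1}")
    case True
    have "v * v < 1 * 1" using True by (intro mult_strict_mono') auto
    moreover have "1 * 1 < u * u" using u by (intro mult_strict_mono') auto
    ultimately have q: "norm (v\<^sup>2 / u\<^sup>2) < 1" using u by (simp add: power2_eq_square)
    have "(\<lambda>k. (v\<^sup>2 / u\<^sup>2) ^ k) sums (1 / (1 - v\<^sup>2 / u\<^sup>2))" by (rule geometric_sums[OF q])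
    then have "(\<lambda>k. (- ln v / u\<^sup>2) * (v\<^sup>2 / u\<^sup>2) ^ k) sums ((- ln v / u\<^sup>2) * (1 / (1 - v\<^sup>2 / u\<^sup>2)))"
      by (rule sums_mult)
    moreover have "(- ln v / u\<^sup>2) * (v\<^sup>2 / u\<^sup>2) ^ k = g k v" for k
    proof -
      have e1: "(v\<^sup>2/u\<^sup>2)^k = v^(2*k)/u^(2*k)" by (simp add: power_divide power_mult)
      have e2: "u^(2*k+2) = u^(2*k) * (u*u)" by (simp add: power_add power2_eq_square)
      show ?thesis using True u unfolding e1 by (simp add: g_def c_def e2 power2_eq_square)
    qed
    moreover have "(- ln v / u\<^sup>2) * (1 / (1 - v\<^sup>2 / u\<^sup>2)) = - ln v / (u\<^sup>2 - v\<^sup>2)"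
      using u by (simp add: field_simps)
    ultimately show ?thesis using True by simp
  next
    case False
    then show ?thesis by (simp add: g_def)
  qed
  have A1: "AE v in lborel. summable (\<lambda>k. norm (g k v))"
  proof (intro AE_I2)
    fix v :: real
    have "summable (\<lambda>k. g k v)" using gsum[of v] by (rule sums_summable)
    then show "summable (\<lambda>k. norm (g k v))" using g_nonneg by simp
  qed
  have A2: "summable (\<lambda>k. (\<integral>v. norm (g k v) \<partial>lborel))"
    using sums_summable[OF sums_int] g_nonneg by simp
  have "integrable lborel (\<lambda>v. \<Sum>k. g k v)" by (rule integrable_suminf[OF int_g A1 A2])
  moreover have "(\<integral>v. (\<Sum>k. g k v) \<partial>lborel) = (\<Sum>k. integral\<^sup>L lborel (g k))"
    by (rule integral_suminf[OF int_g A1 A2])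
  moreover have "(\<lambda>v. \<Sum>k. g k v) = (\<lambda>v. indicator {0<..<1} v *\<^sub>R (- ln v / (u\<^sup>2 - v\<^sup>2)))"
    using gsum by (auto simp: sums_iff)
  ultimately show "set_integrable lborel {0<..<1} (\<lambda>v::real. - ln v / (u\<^sup>2 - v\<^sup>2))"
    and "(LINT v:{0<..<1}|lborel. - ln v / (u\<^sup>2 - v\<^sup>2)) = chi (1/u) / u"
    using sums_int by (simp_all add: set_integrable_def set_lebesgue_integral_def sums_iff)
qed

lemma J_formula: assumes u: "u > 1"
  shows "Jfun u = chi (1/u) / u - ln u * Lfun u / (2*u)"
proof -
  have "Jfun u = (LINT v:{0<..<1}|lborel. ellfun u v / (u\<^sup>2 - v\<^sup>2))"
    unfolding Jfun_def by (rule Icc_Ioo_integral)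
  also have "\<dots> = (LINT v:{0<..<1}|lborel. - ln u / (u\<^sup>2 - v\<^sup>2) + - ln v / (u\<^sup>2 - v\<^sup>2))"
  proof (rule set_lebesgue_integral_cong)
    show "\<forall>v. v \<in> {0<..<1} \<longrightarrow> ellfun u v / (u\<^sup>2 - v\<^sup>2) = - ln u / (u\<^sup>2 - v\<^sup>2) + - ln v / (u\<^sup>2 - v\<^sup>2)"
    proof (intro allI impI)
      fix v :: real assume v: "v \<in> {0<..<1}"
      have "ellfun u v = - ln u + - ln v" using u v by (simp add: ellfun_def ln_div ln_mult)
      then show "ellfun u v / (u\<^sup>2 - v\<^sup>2) = - ln u / (u\<^sup>2 - v\<^sup>2) + - ln v / (u\<^sup>2 - v\<^sup>2)"
        by (simp add: add_divide_distrib diff_divide_distrib)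
    qed
  qed simp
  also have "\<dots> = (LINT v:{0<..<1}|lborel. - ln u / (u\<^sup>2 - v\<^sup>2)) + (LINT v:{0<..<1}|lborel. - ln v / (u\<^sup>2 - v\<^sup>2))"
    by (rule set_integral_add(2)[OF IA(1)[OF u] IB(1)[OF u]])
  also have "\<dots> = chi (1/u) / u - ln u * Lfun u / (2*u)"
    using IA(2)[OF u] IB(2)[OF u] by simp
  finally show ?thesis .
qed

lemma part_i: assumes u: "u > 1"
  shows "Jfun u = 1 / (2 * u) * (Li2 (1 / u) - Li2 (- 1 / u) - ln u * Lfun u)"
proof -
  have e: "Li2 (1/u) - Li2 (- 1/u) = 2 * chi (1/u)" by (simp add: chi_def)
  show ?thesis unfolding J_formula[OF u] e using u by (simp add: field_simps)
qed



lemma B1_bigo: "(\<lambda>u::real. (1 - 1/u) * (1 + ln 2 - ln (1 - 1/u)) / u + pi\<^sup>2 / 8 * (1 - 1/u)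
    + ln u * ln ((u + 1) / (u - 1)) / (2*u)) \<in> O[at_right 1](\<lambda>u. (u - 1) * \<bar>ln (u - 1)\<bar>)"
  by real_asymp

lemma B2_bigo: "(\<lambda>u::real. pi\<^sup>2 / 8 / u ^ 4) \<in> O[at_top](\<lambda>u. (1 + ln u) / u ^ 4)"
  by real_asymp

lemma B3_bigo: "(\<lambda>u::real. ln u / (2*u) * (ln ((u+1)/(u-1)) - 2/u)) \<in> O[at_top](\<lambda>u. (1 + ln u)/u^4)"
  by real_asymp

lemma ev_right1: "eventually (\<lambda>u::real. 1 < u \<and> u < 2) (at_right 1)"
  unfolding eventually_at_right_field by (intro exI[of _ 2]) auto

lemma part_ii_a: "(\<lambda>u. Jfun u - pi\<^sup>2 / 8) \<in> O[at_right 1](\<lambda>u. (u - 1) * \<bar>ln (u - 1)\<bar>)"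
proof -
  define B where "B u = (1 - 1/u) * (1 + ln 2 - ln (1 - 1/u)) / u + pi\<^sup>2 / 8 * (1 - 1/u)
    + ln u * ln ((u + 1) / (u - 1)) / (2*u)" for u :: real
  have "eventually (\<lambda>u. norm (Jfun u - pi\<^sup>2 / 8) \<le> norm (B u)) (at_right 1)"
    using ev_right1
  proof (rule eventually_mono)
    fix u :: real assume u: "1 < u \<and> u < 2"
    define x where "x = 1/u"
    have x: "1/2 \<le> x" "x < 1" "0 < x" using u by (auto simp: x_def field_simps)
    have c1: "chi 1 - chi x \<le> (1 - x) * (1 + ln 2 - ln (1 - x))" by (rule chi_near1[OF x(1,2)])
    have c2: "chi x \<le> chi 1" using chi_bounds(2)[of x] x by auto
    have L0: "0 \<le> Lfun u" using u by (simp add: Lfun_def)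
    have l0: "0 \<le> ln u" using u by simp
    have J: "Jfun u - pi\<^sup>2 / 8 = - ((chi 1 - chi x) * x + pi\<^sup>2 / 8 * (1 - x) + ln u * Lfun u / (2*u))"
      unfolding J_formula[of u, OF conjunct1[OF u]] chi_one[symmetric] using u by (simp add: x_def field_simps)
    have nn: "0 \<le> (chi 1 - chi x) * x + pi\<^sup>2 / 8 * (1 - x) + ln u * Lfun u / (2*u)"
      using c2 x L0 l0 u by (intro add_nonneg_nonneg mult_nonneg_nonneg divide_nonneg_pos) auto
    have "(chi 1 - chi x) * x \<le> (1 - x) * (1 + ln 2 - ln (1 - x)) * x"
      using c1 x by (intro mult_right_mono) auto
    then have "norm (Jfun u - pi\<^sup>2 / 8) \<le> B u"
      unfolding J using nn u by (simp add: B_def x_def Lfun_def)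
    also have "B u \<le> norm (B u)" by simp
    finally show "norm (Jfun u - pi\<^sup>2 / 8) \<le> norm (B u)" .
  qed
  then have "(\<lambda>u. Jfun u - pi\<^sup>2 / 8) \<in> O[at_right 1](B)" by (rule landau_o.big_mono)
  also have "B \<in> O[at_right 1](\<lambda>u. (u - 1) * \<bar>ln (u - 1)\<bar>)"
    using B1_bigo unfolding B_def[abs_def] .
  finally show ?thesis .
qed

lemma part_ii_b: "(\<lambda>u. Jfun u - (1 - ln u) / u\<^sup>2) \<in> O[at_top](\<lambda>u. (1 + ln u) / u ^ 4)"
proof -
  have e: "eventually (\<lambda>u. Jfun u - (1 - ln u) / u\<^sup>2 =
      (chi (1/u) - 1/u) / u - ln u / (2*u) * (ln ((u+1)/(u-1)) - 2/u)) at_top"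
    using eventually_gt_at_top[of 1]
  proof (rule eventually_mono)
    fix u :: real assume u: "1 < u"
    show "Jfun u - (1 - ln u) / u\<^sup>2 = (chi (1/u) - 1/u) / u - ln u / (2*u) * (ln ((u+1)/(u-1)) - 2/u)"
      unfolding J_formula[OF u] Lfun_def using u by (simp add: field_simps power2_eq_square)
  qed
  have f1: "(\<lambda>u. (chi (1/u) - 1/u) / u) \<in> O[at_top](\<lambda>u. (1 + ln u) / u ^ 4)"
  proof -
    have "eventually (\<lambda>u. norm ((chi (1/u) - 1/u) / u) \<le> norm (pi\<^sup>2 / 8 / u ^ 4)) at_top"
      using eventually_gt_at_top[of 1]
    proof (rule eventually_mono)
      fix u :: real assume u: "1 < u"
      have x: "0 \<le> 1/u" "1/u \<le> 1" using u by auto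
      have "0 \<le> chi (1/u) - 1/u" "chi (1/u) - 1/u \<le> (1/u)^3 * chi 1"
        using chi_bounds(3,4)[OF x] by auto
      then have "norm ((chi (1/u) - 1/u) / u) \<le> (1/u)^3 * chi 1 / u"
        using u by (simp add: divide_right_mono)
      also have "\<dots> = pi\<^sup>2 / 8 / u ^ 4" by (simp add: chi_one power_divide field_simps eval_nat_numeral)
      finally show "norm ((chi (1/u) - 1/u) / u) \<le> norm (pi\<^sup>2 / 8 / u ^ 4)" by simp
    qed
    then have "(\<lambda>u. (chi (1/u) - 1/u) / u) \<in> O[at_top](\<lambda>u. pi\<^sup>2 / 8 / u ^ 4)"
      by (rule landau_o.big_mono)
    also note B2_bigo
    finally show ?thesis .
  qed
  have "(\<lambda>u. (chi (1/u) - 1/u) / u - ln u / (2*u) * (ln ((u+1)/(u-1)) - 2/u)) \<in> O[at_top](\<lambda>u. (1 + ln u) / u ^ 4)"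
    by (rule sum_in_bigo(2)[OF f1 B3_bigo])
  then show ?thesis using landau_o.big.in_cong[OF e] by simp
qed



lemma lnsq_F_lim0: "((\<lambda>u::real. (u-1)*ln(u-1)^2 - 2*(u-1)*ln(u-1) + 2*(u-1)) \<longlongrightarrow> 0) (at_right 1)"
  by real_asymp

lemma lnsq_G_deriv: "0 < t \<Longrightarrow> ((\<lambda>t::real. t*ln t^2 - 2*t*ln t + 2*t) has_real_derivative ln t ^ 2) (at t)"
  by (rule derivative_eq_intros refl | simp)+

lemma lnsq_integrable: "set_integrable lborel {1<..<2} (\<lambda>u::real. ln (u - 1) ^ 2)"
proof -
  define F where "F u = (u-1)*ln(u-1)^2 - 2*(u-1)*ln(u-1) + 2*(u-1)" for u :: real
  have d: "DERIV F x :> ln (x - 1) ^ 2" if "1 < x" for x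
  proof -
    have "((\<lambda>x. (\<lambda>t::real. t*ln t^2 - 2*t*ln t + 2*t) (x - 1)) has_real_derivative ln (x - 1) ^ 2 * 1) (at x)"
      by (rule DERIV_chain2[OF lnsq_G_deriv]) (use that in \<open>auto intro!: derivative_eq_intros\<close>)
    then show ?thesis unfolding F_def[abs_def] by simp
  qed
  have l0: "(F \<longlongrightarrow> 0) (at_right 1)" using lnsq_F_lim0 unfolding F_def[abs_def] .
  have l1: "(F \<longlongrightarrow> F 2) (at_left 2)" unfolding F_def[abs_def]
    by (intro tendsto_intros) auto
  note r = interval_integral_FTC_nonneg[of "ereal 1" "ereal 2" F "\<lambda>u. ln (u - 1) ^ 2" 0 "F 2"]
  have "set_integrable lborel (einterval (ereal 1) (ereal 2)) (\<lambda>u. ln (u - 1) ^ 2)"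
    by (rule r(1)) (use d l0 l1 in \<open>auto intro!: continuous_intros simp: ereal_tendsto_simps1\<close>)
  then show ?thesis by simp
qed

lemma invsq_integrable: "set_integrable lborel {1<..} (\<lambda>u::real. 1 / u ^ 2)"
proof -
  define F where "F u = - 1 / u" for u :: real
  have d: "DERIV F x :> 1 / x ^ 2" if "1 < x" for x
    unfolding F_def[abs_def] using that
    by (auto intro!: derivative_eq_intros simp: field_simps power2_eq_square)
  have l0: "(F \<longlongrightarrow> -1) (at_right 1)" unfolding F_def[abs_def]
    by (rule tendsto_eq_intros refl | simp)+
  have l1: "(F \<longlongrightarrow> 0) at_top" unfolding F_def[abs_def] by real_asymp
  note r = interval_integral_FTC_nonneg[of "ereal 1" "\<infinity>" F "\<lambda>u. 1 / u ^ 2" "-1" 0]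
  have "set_integrable lborel (einterval (ereal 1) \<infinity>) (\<lambda>u. 1 / u ^ 2)"
    by (rule r(1)) (use d l0 l1 in \<open>auto intro!: continuous_intros simp: ereal_tendsto_simps1\<close>)
  then show ?thesis by simp
qed

lemma set_bm_cont:
  fixes f :: "real \<Rightarrow> real"
  assumes "continuous_on S f" "S \<subseteq> {1<..}" "A \<subseteq> S" "A \<in> sets borel"
  shows "set_borel_measurable lborel A f"
  unfolding set_borel_measurable_def
  using borel_measurable_continuous_on_indicator[OF assms(4) continuous_on_subset[OF assms(1) assms(3)]]
  by simp

lemma integrable_1_inf:
  fixes f :: "real \<Rightarrow> real"
  assumes cont: "continuous_on {1<..} f"
    and near1: "f \<in> O[at_right 1](\<lambda>u. ln (u - 1) ^ 2)"
    and atinf: "f \<in> O[at_top](\<lambda>u. 1 / u ^ 2)"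
  shows "set_integrable lborel {1<..} f"
proof -
  obtain c1 where c1: "c1 > 0" "eventually (\<lambda>u. norm (f u) \<le> c1 * norm (ln (u - 1) ^ 2)) (at_right 1)"
    using landau_o.bigE[OF near1] by blast
  obtain b where b: "b > 1" "\<And>y. y > 1 \<Longrightarrow> y < b \<Longrightarrow> norm (f y) \<le> c1 * norm (ln (y - 1) ^ 2)"
    using c1(2) unfolding eventually_at_right_field by blast
  obtain c2 where c2: "c2 > 0" "eventually (\<lambda>u. norm (f u) \<le> c2 * norm (1 / u ^ 2)) at_top"
    using landau_o.bigE[OF atinf] by blast
  obtain M where M: "\<And>y. y \<ge> M \<Longrightarrow> norm (f y) \<le> c2 * norm (1 / y ^ 2)"
    using c2(2) unfolding eventually_at_top_linorder by blast
  define b' where "b' = min b 2"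
  define M' where "M' = max M 2"
  have b': "1 < b'" "b' \<le> 2" "b' \<le> b" using b by (auto simp: b'_def)
  have M': "2 \<le> M'" "M \<le> M'" by (auto simp: M'_def)
  have i1: "set_integrable lborel {1<..<b'} f"
  proof (rule set_integrable_bound)
    have "set_integrable lborel {1<..<b'} (\<lambda>u. ln (u - 1) ^ 2)"
      by (rule set_integrable_subset[OF lnsq_integrable]) (use b' in auto)
    then show "set_integrable lborel {1<..<b'} (\<lambda>u. c1 * ln (u - 1) ^ 2)"
      by (rule set_integrable_mult_right)
    show "set_borel_measurable lborel {1<..<b'} f" by (rule set_bm_cont[OF cont]) auto
    show "AE x in lborel. x \<in> {1<..<b'} \<longrightarrow> norm (f x) \<le> norm (c1 * ln (x - 1) ^ 2)"
      using b(2) b' c1(1) by (intro AE_I2) (auto simp: abs_mult)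
  qed
  have i2: "set_integrable lborel {b'..M'} f"
    by (rule borel_integrable_atLeastAtMost'[OF continuous_on_subset[OF cont]]) (use b' in auto)
  have i3: "set_integrable lborel {M'<..} f"
  proof (rule set_integrable_bound)
    have "set_integrable lborel {M'<..} (\<lambda>u. 1 / u ^ 2)"
      by (rule set_integrable_subset[OF invsq_integrable]) (use M' in auto)
    then show "set_integrable lborel {M'<..} (\<lambda>u. c2 * (1 / u ^ 2))"
      by (rule set_integrable_mult_right)
    show "set_borel_measurable lborel {M'<..} f" by (rule set_bm_cont[OF cont]) (use M' in auto)
    show "AE x in lborel. x \<in> {M'<..} \<longrightarrow> norm (f x) \<le> norm (c2 * (1 / x ^ 2))"
      using M M' c2(1) by (intro AE_I2) (auto simp: abs_mult)
  qed
  have "set_integrable lborel ({1<..<b'} \<union> {b'..M'} \<union> {M'<..}) f"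
    by (intro set_integrable_Un i1 i2 i3) auto
  moreover have "{1<..<b'} \<union> {b'..M'} \<union> {M'<..} = {1<..}" using b' M' by auto
  ultimately show ?thesis by simp
qed



definition Ld :: "real \<Rightarrow> real" where "Ld u = - 2 / (u\<^sup>2 - 1)"
definition Jd :: "real \<Rightarrow> real" where "Jd u = - Lfun u / u\<^sup>2 - Jfun u / u - ln u * Ld u / (2*u)"

lemma L_deriv: assumes u: "u > 1" shows "(Lfun has_real_derivative Ld u) (at u)"
proof -
  have "((\<lambda>u. ln (u + 1) - ln (u - 1)) has_real_derivative (1 / (u + 1) - 1 / (u - 1))) (at u)"
    using u by (auto intro!: derivative_eq_intros)
  moreover have "1 / (u + 1) - 1 / (u - 1) = Ld u"
  proof -
    have e: "u\<^sup>2 - 1 = (u+1)*(u-1)" by (simp add: power2_eq_square algebra_simps)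
    show ?thesis unfolding Ld_def e using u by (simp add: field_simps)
  qed
  ultimately have "((\<lambda>u. ln (u + 1) - ln (u - 1)) has_real_derivative Ld u) (at u)" by simp
  then show ?thesis
    by (rule has_field_derivative_transform_within_open[where S="{1<..}"])
       (use u in \<open>auto simp: Lfun_def ln_div\<close>)
qed

lemma artanh_inv: assumes u: "u > 1" shows "artanh (1/u) = Lfun u / 2"
proof -
  have "(1 + 1/u)/(1 - 1/u) = (u+1)/(u-1)" using u by (simp add: field_simps)
  then show ?thesis by (simp add: artanh_def Lfun_def)
qed

lemma J_deriv: assumes u: "u > 1" shows "(Jfun has_real_derivative Jd u) (at u)"
proof -
  have dinv: "((\<lambda>u. 1/u) has_real_derivative (- 1 / u\<^sup>2)) (at u)"
    using u by (auto intro!: derivative_eq_intros simp: power2_eq_square)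
  have dc: "(chi has_real_derivative (artanh (1/u) / (1/u))) (at (1/u))"
    by (rule chi_deriv) (use u in auto)
  have dchi: "((\<lambda>u. chi (1/u)) has_real_derivative (- Lfun u / (2*u))) (at u)"
  proof -
    have "((\<lambda>u. chi (1/u)) has_real_derivative (artanh (1/u) / (1/u)) * (- 1 / u\<^sup>2)) (at u)"
      by (rule DERIV_chain2[OF dc dinv])
    moreover have "(artanh (1/u) / (1/u)) * (- 1 / u\<^sup>2) = - Lfun u / (2*u)"
      using u by (simp add: artanh_inv power2_eq_square)
    ultimately show ?thesis by simp
  qed
  have dL: "(Lfun has_real_derivative Ld u) (at u)" by (rule L_deriv[OF u])
  have dp: "((\<lambda>x. ln x * Lfun x) has_real_derivative (1/u * Lfun u + ln u * Ld u)) (at u)"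
    using DERIV_mult'[OF DERIV_ln[of u] dL] u by (simp add: field_simps)
  define G where "G u = chi (1/u) / u - ln u * Lfun u / (2*u)" for u
  have "(G has_real_derivative
      ((- Lfun u / (2*u)) * u - chi (1/u) * 1) / (u * u)
      - ((1/u * Lfun u + ln u * Ld u) * (2*u) - ln u * Lfun u * 2) / ((2*u) * (2*u))) (at u)"
    unfolding G_def[abs_def]
    by (intro DERIV_diff DERIV_divide dp dchi DERIV_ident DERIV_cmult) (use u in auto)
  moreover have "((- Lfun u / (2*u)) * u - chi (1/u) * 1) / (u * u)
      - ((1/u * Lfun u + ln u * Ld u) * (2*u) - ln u * Lfun u * 2) / ((2*u) * (2*u)) = Jd u"
    unfolding Jd_def J_formula[OF u] using u by (simp add: field_simps power2_eq_square)
  ultimately have "(G has_real_derivative Jd u) (at u)" by simp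
  then show ?thesis
    by (rule has_field_derivative_transform_within_open[where S="{1<..}"])
       (use u in \<open>auto simp: G_def J_formula\<close>)
qed


lemma E1: "(\<lambda>u::real. ln((u+1)/(u-1)) * ((u-1)*\<bar>ln(u-1)\<bar>)) \<in> O[at_right 1](\<lambda>u. ln(u-1)^2)" by real_asymp
lemma E2: "(\<lambda>u::real. (-2/(u\<^sup>2-1)) * ((u-1)*\<bar>ln(u-1)\<bar>)) \<in> O[at_right 1](\<lambda>u. ln(u-1)^2)" by real_asymp
lemma E3: "(\<lambda>u::real. ln((u+1)/(u-1)) * (- ln((u+1)/(u-1))/u\<^sup>2 - ln u*(-2/(u\<^sup>2-1))/(2*u))) \<in> O[at_right 1](\<lambda>u. ln(u-1)^2)" by real_asymp
lemma E4: "(\<lambda>u::real. ln((u+1)/(u-1))/u * 1) \<in> O[at_right 1](\<lambda>u. ln(u-1)^2)" by real_asymp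
lemma E5: "(\<lambda>u::real. (u-1)*\<bar>ln(u-1)\<bar>) \<in> O[at_right 1](\<lambda>u. 1)" by real_asymp
lemma E6: "(\<lambda>u::real. pi\<^sup>2/8) \<in> O[at_right 1](\<lambda>u. 1)" by real_asymp
lemma T1: "(\<lambda>u::real. (1+ln u)/u^4) \<in> O[at_top](\<lambda>u. ln u/u\<^sup>2)" by real_asymp
lemma T2: "(\<lambda>u::real. (1-ln u)/u\<^sup>2) \<in> O[at_top](\<lambda>u. ln u/u\<^sup>2)" by real_asymp
lemma T3: "(\<lambda>u::real. ln((u+1)/(u-1)) * (ln u/u\<^sup>2)) \<in> O[at_top](\<lambda>u. 1/u^2)" by real_asymp
lemma T4: "(\<lambda>u::real. (-2/(u\<^sup>2-1)) * (ln u/u\<^sup>2)) \<in> O[at_top](\<lambda>u. 1/u^2)" by real_asymp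
lemma T5: "(\<lambda>u::real. ln((u+1)/(u-1)) * (- ln((u+1)/(u-1))/u\<^sup>2 - ln u*(-2/(u\<^sup>2-1))/(2*u))) \<in> O[at_top](\<lambda>u. 1/u^2)" by real_asymp
lemma T6: "(\<lambda>u::real. ln((u+1)/(u-1))/u * (ln u/u\<^sup>2)) \<in> O[at_top](\<lambda>u. 1/u^2)" by real_asymp



lemmas E1' = E1[folded Lfun_def]
lemmas E2' = E2[folded Ld_def]
lemmas E3' = E3[folded Ld_def Lfun_def]
lemmas E4' = E4[folded Lfun_def]
lemmas T3' = T3[folded Lfun_def]
lemmas T4' = T4[folded Ld_def]
lemmas T5' = T5[folded Ld_def Lfun_def]
lemmas T6' = T6[folded Lfun_def]

lemma J_bigO1: "Jfun \<in> O[at_right 1](\<lambda>u. 1)"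
proof -
  have "(\<lambda>u. Jfun u - pi\<^sup>2 / 8) \<in> O[at_right 1](\<lambda>u. 1)"
    using landau_o.big_trans[OF part_ii_a E5] .
  from sum_in_bigo(1)[OF this E6] show ?thesis by simp
qed

lemma J_bigO_top: "Jfun \<in> O[at_top](\<lambda>u. ln u / u\<^sup>2)"
proof -
  have "(\<lambda>u. Jfun u - (1 - ln u) / u\<^sup>2) \<in> O[at_top](\<lambda>u. ln u / u\<^sup>2)"
    using landau_o.big_trans[OF part_ii_b T1] .
  from sum_in_bigo(1)[OF this T2] show ?thesis by simp
qed

lemma isCont_J: "u > 1 \<Longrightarrow> isCont Jfun u"
  using J_deriv DERIV_isCont by blast
lemma isCont_L: "u > 1 \<Longrightarrow> isCont Lfun u"
  using L_deriv DERIV_isCont by blast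
lemma isCont_Ld: "u > 1 \<Longrightarrow> isCont Ld u"
  unfolding Ld_def[abs_def] using less_1_mult[of u u] by (intro continuous_intros) (auto simp: power2_eq_square)
lemma isCont_Jd: "u > 1 \<Longrightarrow> isCont Jd u"
  unfolding Jd_def[abs_def] by (intro continuous_intros isCont_J isCont_L isCont_Ld) auto

lemma chi1_facts:
  fixes \<chi>1 :: "real \<Rightarrow> real" and \<delta> :: real
  assumes d: "\<delta> > 0" and sm: "smooth_on_set {1..} \<chi>1"
    and one: "\<forall>u. 1 \<le> u \<and> u \<le> 1 + \<delta> \<longrightarrow> \<chi>1 u = 1"
    and zero: "\<forall>u. u \<ge> 1 + 2 * \<delta> \<longrightarrow> \<chi>1 u = 0"
  obtains D1 where "\<And>x. x > 1 \<Longrightarrow> (\<chi>1 has_real_derivative D1 x) (at x)"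
    "\<And>x. x > 1 \<Longrightarrow> isCont D1 x"
    "\<And>x. 1 < x \<Longrightarrow> x < 1 + \<delta> \<Longrightarrow> D1 x = 0"
    "\<And>x. x > 1 + 2 * \<delta> \<Longrightarrow> D1 x = 0"
proof -
  obtain D :: "nat \<Rightarrow> real \<Rightarrow> real" where D0: "\<forall>x\<in>{1..}. D 0 x = \<chi>1 x"
    and DS: "\<forall>k. \<forall>x\<in>{1..}. (D k has_real_derivative D (Suc k) x) (at x within {1..})"
    using sm unfolding smooth_on_set_def by blast
  have at: "at x within {1..} = at x" if "x > 1" for x :: real
    using that by (intro at_within_interior) (simp add: interior_Ici[of 0])
  have dk: "(D k has_real_derivative D (Suc k) x) (at x)" if "x > 1" for k x
  proof -
    have "(D k has_real_derivative D (Suc k) x) (at x within {1..})" using DS that by auto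
    then show ?thesis using at[OF that] by simp
  qed
  have d1: "(\<chi>1 has_real_derivative D 1 x) (at x)" if "x > 1" for x
  proof -
    have "(D 0 has_real_derivative D 1 x) (at x)" using dk[OF that, of 0] by simp
    then show ?thesis
      by (rule has_field_derivative_transform_within_open[where S="{1<..}"]) (use that D0 in auto)
  qed
  have c1: "isCont (D 1) x" if "x > 1" for x
    using dk[OF that, of 1] DERIV_isCont by simp
  have z1: "D 1 x = 0" if "1 < x" "x < 1 + \<delta>" for x
  proof -
    have "((\<lambda>_. 1) has_real_derivative 0) (at x)" by simp
    then have "(\<chi>1 has_real_derivative 0) (at x)"
      by (rule has_field_derivative_transform_within_open[where S="{1<..<1+\<delta>}"]) (use that one in auto)
    with d1[of x] that show ?thesis using DERIV_unique by force
  qed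
  have z2: "D 1 x = 0" if "x > 1 + 2 * \<delta>" for x
  proof -
    have "((\<lambda>_. 0) has_real_derivative 0) (at x)" by simp
    then have "(\<chi>1 has_real_derivative 0) (at x)"
      by (rule has_field_derivative_transform_within_open[where S="{1 + 2 * \<delta><..}"]) (use that zero in auto)
    with d1[of x] that d show ?thesis using DERIV_unique by force
  qed
  show ?thesis using that d1 c1 z1 z2 by blast
qed

lemma test_facts:
  assumes "test_fun \<phi>"
  obtains a b P1 where "1 < a" "a \<le> b" "\<And>x. x \<notin> {a..b} \<Longrightarrow> \<phi> x = 0"
    "\<And>x. deriv \<phi> x = P1 x" "\<And>x. isCont P1 x" "\<And>x. (\<phi> has_real_derivative P1 x) (at x)"
    "\<And>x. x \<notin> {a..b} \<Longrightarrow> P1 x = 0"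
proof -
  obtain D :: "nat \<Rightarrow> real \<Rightarrow> real" where D0: "\<forall>x. D 0 x = \<phi> x"
    and DS: "\<forall>k. \<forall>x. (D k has_real_derivative D (Suc k) x) (at x)"
    using assms unfolding test_fun_def smooth_on_set_def by auto
  obtain a b where ab: "1 < a" "a \<le> b" "\<And>x. x \<notin> {a..b} \<Longrightarrow> \<phi> x = 0"
    using assms unfolding test_fun_def by blast
  have phiD: "\<phi> = D 0" using D0 by auto
  have d1: "(\<phi> has_real_derivative D 1 x) (at x)" for x
    using DS phiD by (metis One_nat_def)
  have c1: "isCont (D 1) x" for x
    using DS DERIV_isCont by blast
  have dv: "deriv \<phi> x = D 1 x" for x by (rule DERIV_imp_deriv[OF d1])
  have z: "D 1 x = 0" if "x \<notin> {a..b}" for x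
  proof (cases "x < a")
    case True
    have "((\<lambda>_. 0) has_real_derivative 0) (at x)" by simp
    then have "(\<phi> has_real_derivative 0) (at x)"
      by (rule has_field_derivative_transform_within_open[where S="{..<a}"]) (use True ab in auto)
    with d1[of x] show ?thesis using DERIV_unique by force
  next
    case False
    then have "x > b" using that by auto
    have "((\<lambda>_. 0) has_real_derivative 0) (at x)" by simp
    then have "(\<phi> has_real_derivative 0) (at x)"
      by (rule has_field_derivative_transform_within_open[where S="{b<..}"]) (use \<open>x > b\<close> ab in auto)
    with d1[of x] show ?thesis using DERIV_unique by force
  qed
  show ?thesis using that[OF ab dv c1 d1 z] by blast
qed

lemma part_iii:
  fixes \<delta> :: real and \<chi>1 :: "real \<Rightarrow> real"
  assumes d: "\<delta> > 0" and sm: "smooth_on_set {1..} \<chi>1"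
    and one: "\<forall>u. 1 \<le> u \<and> u \<le> 1 + \<delta> \<longrightarrow> \<chi>1 u = 1"
    and zero: "\<forall>u. u \<ge> 1 + 2 * \<delta> \<longrightarrow> \<chi>1 u = 0"
  shows "W11 (\<lambda>u. Bcal u - pi\<^sup>2 / 8 * \<chi>1 u * Lfun u)"
proof -
  obtain D1 where dc: "\<And>x. x > 1 \<Longrightarrow> (\<chi>1 has_real_derivative D1 x) (at x)"
    and cD: "\<And>x. x > 1 \<Longrightarrow> isCont D1 x"
    and z1: "\<And>x. 1 < x \<Longrightarrow> x < 1 + \<delta> \<Longrightarrow> D1 x = 0"
    and z2: "\<And>x. x > 1 + 2 * \<delta> \<Longrightarrow> D1 x = 0"
    using chi1_facts[OF d sm one zero] by blast
  define h where "h u = Bcal u - pi\<^sup>2 / 8 * \<chi>1 u * Lfun u" for u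
  define g where "g u = Ld u * (Jfun u - pi\<^sup>2 / 8 * \<chi>1 u) + Lfun u * (Jd u - pi\<^sup>2 / 8 * D1 u)" for u
  have hd: "(h has_real_derivative g u) (at u)" if u: "u > 1" for u
  proof -
    have "(h has_real_derivative (Ld u * Jfun u + Jd u * Lfun u)
        - (pi\<^sup>2 / 8 * D1 u * Lfun u + Ld u * (pi\<^sup>2 / 8 * \<chi>1 u))) (at u)"
      unfolding h_def[abs_def] Bcal_def
      by (intro DERIV_diff DERIV_mult DERIV_cmult L_deriv J_deriv dc u)
    moreover have "(Ld u * Jfun u + Jd u * Lfun u)
        - (pi\<^sup>2 / 8 * D1 u * Lfun u + Ld u * (pi\<^sup>2 / 8 * \<chi>1 u)) = g u"
      by (simp add: g_def algebra_simps)
    ultimately show ?thesis by simp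
  qed
  have ch: "continuous_on {1<..} h"
    using hd DERIV_isCont by (intro continuous_at_imp_continuous_on) auto
  have cchi: "isCont \<chi>1 x" if "x > 1" for x using dc[OF that] DERIV_isCont by blast
  have cg: "continuous_on {1<..} g"
    unfolding g_def
    by (intro continuous_at_imp_continuous_on ballI continuous_intros isCont_Ld isCont_J isCont_L isCont_Jd cchi cD) auto
  have ev1: "eventually (\<lambda>u::real. 1 < u \<and> u < 1 + \<delta>) (at_right 1)"
    unfolding eventually_at_right_field using d by (intro exI[of _ "1 + \<delta>"]) auto
  have evt: "eventually (\<lambda>u::real. 1 + 2 * \<delta> < u) at_top" by (rule eventually_gt_at_top)
  have evt': "eventually (\<lambda>u::real. 1 + 2 * \<delta> < u \<and> 1 < u) at_top"
    using evt by eventually_elim (use d in auto)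
  have h1: "h \<in> O[at_right 1](\<lambda>u. ln (u - 1) ^ 2)"
  proof -
    have "(\<lambda>u. Lfun u * (Jfun u - pi\<^sup>2 / 8)) \<in> O[at_right 1](\<lambda>u. Lfun u * ((u - 1) * \<bar>ln (u - 1)\<bar>))"
      by (rule landau_o.big.mult_left[OF part_ii_a])
    also note E1'
    finally have *: "(\<lambda>u. Lfun u * (Jfun u - pi\<^sup>2 / 8)) \<in> O[at_right 1](\<lambda>u. ln (u - 1) ^ 2)" .
    have "eventually (\<lambda>u. Lfun u * (Jfun u - pi\<^sup>2 / 8) = h u) (at_right 1)"
      using ev1 by eventually_elim (use one in \<open>auto simp: h_def Bcal_def algebra_simps\<close>)
    from landau_o.big.in_cong[OF this] * show ?thesis by simp
  qed
  have g1: "g \<in> O[at_right 1](\<lambda>u. ln (u - 1) ^ 2)"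
  proof -
    have "(\<lambda>u. Ld u * (Jfun u - pi\<^sup>2 / 8)) \<in> O[at_right 1](\<lambda>u. Ld u * ((u - 1) * \<bar>ln (u - 1)\<bar>))"
      by (rule landau_o.big.mult_left[OF part_ii_a])
    also note E2'
    finally have t1: "(\<lambda>u. Ld u * (Jfun u - pi\<^sup>2 / 8)) \<in> O[at_right 1](\<lambda>u. ln (u - 1) ^ 2)" .
    have "(\<lambda>u. Lfun u / u * Jfun u) \<in> O[at_right 1](\<lambda>u. Lfun u / u * 1)"
      by (rule landau_o.big.mult_left[OF J_bigO1])
    also note E4'
    finally have t3: "(\<lambda>u. Lfun u / u * Jfun u) \<in> O[at_right 1](\<lambda>u. ln (u - 1) ^ 2)" .
    have *: "(\<lambda>u. (Ld u * (Jfun u - pi\<^sup>2 / 8) + Lfun u * (- Lfun u / u\<^sup>2 - ln u * Ld u / (2 * u)))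
        - Lfun u / u * Jfun u) \<in> O[at_right 1](\<lambda>u. ln (u - 1) ^ 2)"
      by (intro sum_in_bigo t1 t3 E3')
    have "eventually (\<lambda>u. (Ld u * (Jfun u - pi\<^sup>2 / 8) + Lfun u * (- Lfun u / u\<^sup>2 - ln u * Ld u / (2 * u)))
        - Lfun u / u * Jfun u = g u) (at_right 1)"
      using ev1 by eventually_elim (use one z1 in \<open>auto simp: g_def Jd_def algebra_simps\<close>)
    from landau_o.big.in_cong[OF this] * show ?thesis by simp
  qed
  have hT: "h \<in> O[at_top](\<lambda>u. 1 / u ^ 2)"
  proof -
    have "(\<lambda>u. Lfun u * Jfun u) \<in> O[at_top](\<lambda>u. Lfun u * (ln u / u\<^sup>2))"
      by (rule landau_o.big.mult_left[OF J_bigO_top])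
    also note T3'
    finally have *: "(\<lambda>u. Lfun u * Jfun u) \<in> O[at_top](\<lambda>u. 1 / u ^ 2)" .
    have "eventually (\<lambda>u. Lfun u * Jfun u = h u) at_top"
      using evt by eventually_elim (use zero in \<open>auto simp: h_def Bcal_def\<close>)
    from landau_o.big.in_cong[OF this] * show ?thesis by simp
  qed
  have gT: "g \<in> O[at_top](\<lambda>u. 1 / u ^ 2)"
  proof -
    have "(\<lambda>u. Ld u * Jfun u) \<in> O[at_top](\<lambda>u. Ld u * (ln u / u\<^sup>2))"
      by (rule landau_o.big.mult_left[OF J_bigO_top])
    also note T4'
    finally have t1: "(\<lambda>u. Ld u * Jfun u) \<in> O[at_top](\<lambda>u. 1 / u ^ 2)" .
    have "(\<lambda>u. Lfun u / u * Jfun u) \<in> O[at_top](\<lambda>u. Lfun u / u * (ln u / u\<^sup>2))"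
      by (rule landau_o.big.mult_left[OF J_bigO_top])
    also note T6'
    finally have t3: "(\<lambda>u. Lfun u / u * Jfun u) \<in> O[at_top](\<lambda>u. 1 / u ^ 2)" .
    have *: "(\<lambda>u. (Ld u * Jfun u + Lfun u * (- Lfun u / u\<^sup>2 - ln u * Ld u / (2 * u)))
        - Lfun u / u * Jfun u) \<in> O[at_top](\<lambda>u. 1 / u ^ 2)"
      by (intro sum_in_bigo t1 t3 T5')
    have "eventually (\<lambda>u. (Ld u * Jfun u + Lfun u * (- Lfun u / u\<^sup>2 - ln u * Ld u / (2 * u)))
        - Lfun u / u * Jfun u = g u) at_top"
      using evt' by eventually_elim (use zero z2 in \<open>auto simp: g_def Jd_def algebra_simps\<close>)
    from landau_o.big.in_cong[OF this] * show ?thesis by simp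
  qed
  have ih: "set_integrable lborel {1<..} h" by (rule integrable_1_inf[OF ch h1 hT])
  have ig: "set_integrable lborel {1<..} g" by (rule integrable_1_inf[OF cg g1 gT])
  have weak: "(LINT x:{1<..}|lborel. h x * deriv \<phi> x) = - (LINT x:{1<..}|lborel. g x * \<phi> x)"
    if tf: "test_fun \<phi>" for \<phi>
  proof -
    obtain a b P1 where ab: "1 < a" "a \<le> b" and phz: "\<And>x. x \<notin> {a..b} \<Longrightarrow> \<phi> x = 0"
      and dv: "\<And>x. deriv \<phi> x = P1 x" and cP: "\<And>x. isCont P1 x"
      and dphi: "\<And>x. (\<phi> has_real_derivative P1 x) (at x)"
      and Pz: "\<And>x. x \<notin> {a..b} \<Longrightarrow> P1 x = 0"
      using test_facts[OF tf] by blast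
    define a' where "a' = (1 + a) / 2"
    define b' where "b' = b + 1"
    have a'b': "1 < a'" "a' < a" "b < b'" "a' \<le> b'" using ab by (auto simp: a'_def b'_def)
    have sub: "{a'..b'} \<subseteq> {1<..}" using a'b' by auto
    have e1: "(LINT x:{1<..}|lborel. h x * deriv \<phi> x) = (LINT x:{a'..b'}|lborel. h x * P1 x)"
      unfolding set_lebesgue_integral_def
    proof (rule arg_cong[where f="integral\<^sup>L lborel"], rule ext)
      fix x :: real
      show "indicator {1<..} x *\<^sub>R (h x * deriv \<phi> x) = indicator {a'..b'} x *\<^sub>R (h x * P1 x)"
        using Pz[of x] a'b' dv[of x] by (cases "x \<in> {a'..b'}"; cases "x \<in> {1<..}") (auto simp: indicator_def)
    qed
    have e2: "(LINT x:{1<..}|lborel. g x * \<phi> x) = (LINT x:{a'..b'}|lborel. g x * \<phi> x)"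
      unfolding set_lebesgue_integral_def
    proof (rule arg_cong[where f="integral\<^sup>L lborel"], rule ext)
      fix x :: real
      show "indicator {1<..} x *\<^sub>R (g x * \<phi> x) = indicator {a'..b'} x *\<^sub>R (g x * \<phi> x)"
        using phz[of x] a'b' by (cases "x \<in> {a'..b'}"; cases "x \<in> {1<..}") (auto simp: indicator_def)
    qed
    have cphi: "isCont \<phi> x" for x using dphi[of x] DERIV_isCont by blast
    have c1: "continuous_on {a'..b'} (\<lambda>x. h x * P1 x)"
      by (intro continuous_intros continuous_on_subset[OF ch sub] continuous_at_imp_continuous_on ballI cP)
    have c2: "continuous_on {a'..b'} (\<lambda>x. g x * \<phi> x)"
      by (intro continuous_intros continuous_on_subset[OF cg sub] continuous_at_imp_continuous_on ballI cphi)
    have i1: "set_integrable lborel {a'..b'} (\<lambda>x. h x * P1 x)" by (rule borel_integrable_atLeastAtMost'[OF c1])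
    have i2: "set_integrable lborel {a'..b'} (\<lambda>x. g x * \<phi> x)" by (rule borel_integrable_atLeastAtMost'[OF c2])
    have "(LBINT x=ereal a'..ereal b'. g x * \<phi> x + h x * P1 x) = h b' * \<phi> b' - h a' * \<phi> a'"
    proof (rule interval_integral_FTC_finite)
      show "continuous_on {min a' b'..max a' b'} (\<lambda>x. g x * \<phi> x + h x * P1 x)"
        using c1 c2 a'b' by (auto intro!: continuous_on_add)
      fix x assume x: "min a' b' \<le> x" "x \<le> max a' b'"
      then have "x > 1" using a'b' by auto
      have "((\<lambda>x. h x * \<phi> x) has_real_derivative g x * \<phi> x + P1 x * h x) (at x)"
        by (rule DERIV_mult[OF hd[OF \<open>x > 1\<close>] dphi])
      then show "((\<lambda>x. h x * \<phi> x) has_vector_derivative g x * \<phi> x + h x * P1 x) (at x within {min a' b'..max a' b'})"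
        by (simp add: has_real_derivative_iff_has_vector_derivative has_vector_derivative_at_within mult.commute)
    qed
    moreover have "\<phi> a' = 0" "\<phi> b' = 0" using phz a'b' by auto
    ultimately have "(LINT x:{a'..b'}|lborel. g x * \<phi> x + h x * P1 x) = 0"
      using a'b' by (simp add: interval_integral_Icc)
    then have "(LINT x:{a'..b'}|lborel. g x * \<phi> x) + (LINT x:{a'..b'}|lborel. h x * P1 x) = 0"
      using set_integral_add(2)[OF i2 i1] by simp
    then show ?thesis unfolding e1 e2 by linarith
  qed
  show ?thesis
    unfolding W11_def h_def[symmetric] using ih ig weak by blast
qed


theorem lemma4:
  shows "(\<forall>u::real. u > 1 \<longrightarrow>
           Jfun u = 1 / (2 * u) * (Li2 (1 / u) - Li2 (- 1 / u) - ln u * Lfun u)) \<and>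
         (\<lambda>u. Jfun u - pi\<^sup>2 / 8) \<in> O[at_right 1](\<lambda>u. (u - 1) * \<bar>ln (u - 1)\<bar>) \<and>
         (\<lambda>u. Jfun u - (1 - ln u) / u\<^sup>2) \<in> O[at_top](\<lambda>u. (1 + ln u) / u ^ 4) \<and>
         (\<forall>(\<delta>::real) \<chi>1. \<delta> > 0 \<longrightarrow> smooth_on_set {1..} \<chi>1 \<longrightarrow>
           (\<exists>K. compact K \<and> K \<subseteq> {1..} \<and> (\<forall>x\<in>{1..} - K. \<chi>1 x = 0)) \<longrightarrow>
           (\<forall>u. 1 \<le> u \<and> u \<le> 1 + \<delta> \<longrightarrow> \<chi>1 u = 1) \<longrightarrow>
           (\<forall>u. u \<ge> 1 + 2 * \<delta> \<longrightarrow> \<chi>1 u = 0) \<longrightarrow>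
           W11 (\<lambda>u. Bcal u - pi\<^sup>2 / 8 * \<chi>1 u * Lfun u))"
  proof (intro conjI allI impI)
  fix u :: real assume "u > 1"
  then show "Jfun u = 1 / (2 * u) * (Li2 (1 / u) - Li2 (- 1 / u) - ln u * Lfun u)" by (rule part_i)
next
  show "(\<lambda>u. Jfun u - pi\<^sup>2 / 8) \<in> O[at_right 1](\<lambda>u. (u - 1) * \<bar>ln (u - 1)\<bar>)" by (rule part_ii_a)
next
  show "(\<lambda>u. Jfun u - (1 - ln u) / u\<^sup>2) \<in> O[at_top](\<lambda>u. (1 + ln u) / u ^ 4)" by (rule part_ii_b)
next
  fix \<delta> :: real and \<chi>1 :: "real \<Rightarrow> real"
  assume "\<delta> > 0" "smooth_on_set {1..} \<chi>1"
    "\<exists>K. compact K \<and> K \<subseteq> {1..} \<and> (\<forall>x\<in>{1..} - K. \<chi>1 x = 0)"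
    "\<forall>u. 1 \<le> u \<and> u \<le> 1 + \<delta> \<longrightarrow> \<chi>1 u = 1" "\<forall>u. u \<ge> 1 + 2 * \<delta> \<longrightarrow> \<chi>1 u = 0"
  then show "W11 (\<lambda>u. Bcal u - pi\<^sup>2 / 8 * \<chi>1 u * Lfun u)" by (intro part_iii) auto
qed

end
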